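(* Let $U\subset\mathbb{R}^u\times\mathbb{R}^s$ be a convex neighborhood of zero and let $f:U\to\mathbb{R}^u\times\mathbb{R}^s$ be a $C^1$ map with $f(0)=0$. Suppose that for $M>0$, $m\left(\left[\frac{\partial f_{\mathrm x}}{\partial\mathrm x}(U)\right]\right)-\frac1M\sup_{z\in U}\left\|\frac{\partial f_{\mathrm x}}{\partial\mathrm y}(z)\right\|\ge\xi$, $\sup_{z\in U}\left\{\left\|\frac{\partial f_{\mathrm y}}{\partial\mathrm y}(z)\right\|+M\left\|\frac{\partial f_{\mathrm y}}{\partial\mathrm x}(z)\right\|\right\}\le\mu$, and $\xi/\mu>1$. Let $J_s(0,M)=\{(\mathrm x,\mathrm y):\|\mathrm x\|\le M\|\mathrm y\|\}$ and $J^c_s(0,M)=(\mathbb{R}^u\times\mathbb{R}^s)\setminus J_s(0,M)$. Then $f\left(\overline{J^c_s(0,M)}\cap U\right)\subset J^c_s(0,M)\cup\{0\}$.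
   Context: Points of $\mathbb{R}^u\times\mathbb{R}^s$ are written $(\mathrm x,\mathrm y)$, $f=(f_{\mathrm x},f_{\mathrm y})$, norms Euclidean. For a linear map $A$, $m(A)=\max\{c:\|Av\|\ge c\|v\|\ \forall v\}$; for a set $\mathbf A$ of matrices, $m(\mathbf A)=\inf_{A\in\mathbf A}m(A)$. $[\partial f_{\mathrm x}/\partial\mathrm x(U)]$ is the set of matrices whose $(i,j)$ entry lies in $[\inf_{U}\partial f_{\mathrm x,i}/\partial\mathrm x_j,\sup_U\partial f_{\mathrm x,i}/\partial\mathrm x_j]$. $\overline{A}$ denotes closure. *)

theory Defs
  imports "HOL-Analysis.Analysis"
begin

definition min_norm :: "real^'n^'n \<Rightarrow> real" where
  "min_norm A = Sup {c. \<forall>v. norm (A *v v) \<ge> c * norm v}"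

definition min_norm_set :: "(real^'n^'n) set \<Rightarrow> real" where
  "min_norm_set S = Inf (min_norm ` S)"

text \<open>Interval matrix: entry (i,j) lies in [inf_U g i j, sup_U g i j], where the
  infimum/supremum are taken in the extended reals (a real a lies above the inf
  iff it lies above every lower bound of the value set, etc.).\<close>
definition interval_matrix :: "'z set \<Rightarrow> ('z \<Rightarrow> real^'n^'n) \<Rightarrow> (real^'n^'n) set" where
  "interval_matrix U g = {A. \<forall>i j.
      (\<forall>b. (\<forall>z\<in>U. b \<le> g z $ i $ j) \<longrightarrow> b \<le> A $ i $ j) \<and>
      (\<forall>b. (\<forall>z\<in>U. g z $ i $ j \<le> b) \<longrightarrow> A $ i $ j \<le> b)}"

definition dxx :: "(((real^'u) \<times> (real^'s)) \<Rightarrow>\<^sub>L ((real^'u) \<times> (real^'s))) \<Rightarrow> real^'u \<Rightarrow> real^'u" where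
  "dxx D v = fst (blinfun_apply D (v, 0))"
definition dxy :: "(((real^'u) \<times> (real^'s)) \<Rightarrow>\<^sub>L ((real^'u) \<times> (real^'s))) \<Rightarrow> real^'s \<Rightarrow> real^'u" where
  "dxy D w = fst (blinfun_apply D (0, w))"
definition dyx :: "(((real^'u) \<times> (real^'s)) \<Rightarrow>\<^sub>L ((real^'u) \<times> (real^'s))) \<Rightarrow> real^'u \<Rightarrow> real^'s" where
  "dyx D v = snd (blinfun_apply D (v, 0))"
definition dyy :: "(((real^'u) \<times> (real^'s)) \<Rightarrow>\<^sub>L ((real^'u) \<times> (real^'s))) \<Rightarrow> real^'s \<Rightarrow> real^'s" where
  "dyy D w = snd (blinfun_apply D (0, w))"

definition Js :: "real \<Rightarrow> ((real^'u) \<times> (real^'s)) set" where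
  "Js M = {(x, y). norm x \<le> M * norm y}"

end

theory Submission
  imports Defs
begin

lemma bl_matvec: "bounded_linear (\<lambda>A::real^'n^'m. A *v x)"
proof -
  have "linear (\<lambda>A::real^'n^'m. A *v x)"
    apply (rule linearI)
    apply (simp add: matrix_vector_mult_add_rdistrib)
    apply (simp add: matrix_vector_mult_def vec_eq_iff sum_distrib_left mult.assoc)
    done
  then show ?thesis by (simp add: linear_conv_bounded_linear)
qed

lemma bl_dxx: "bounded_linear (dxx D)"
  unfolding dxx_def[abs_def] by (auto intro!: bounded_linear_intros)
lemma bl_dxy: "bounded_linear (dxy D)"
  unfolding dxy_def[abs_def] by (auto intro!: bounded_linear_intros)
lemma bl_dyx: "bounded_linear (dyx D)"
  unfolding dyx_def[abs_def] by (auto intro!: bounded_linear_intros)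
lemma bl_dyy: "bounded_linear (dyy D)"
  unfolding dyy_def[abs_def] by (auto intro!: bounded_linear_intros)

lemma min_norm_bound:
  fixes A :: "real^'n^'n"
  shows "norm (A *v v) \<ge> min_norm A * norm v"
proof (cases "v = 0")
  case True then show ?thesis by simp
next
  case False
  let ?S = "{c. \<forall>v. norm (A *v v) \<ge> c * norm v}"
  have ne: "0 \<in> ?S" by simp
  have "min_norm A \<le> norm (A *v v) / norm v"
    unfolding min_norm_def
  proof (rule cSup_least)
    show "?S \<noteq> {}" using ne by blast
    fix c assume "c \<in> ?S"
    then have "c * norm v \<le> norm (A *v v)" by blast
    then show "c \<le> norm (A *v v) / norm v" using False by (simp add: field_simps)
  qed
  then show ?thesis using False by (simp add: field_simps)
qed

lemma min_norm_nonneg: "min_norm (A::real^'n^'n) \<ge> 0"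
proof -
  let ?S = "{c. \<forall>v. norm (A *v v) \<ge> c * norm v}"
  let ?v = "axis undefined (1::real) :: real^'n"
  have nv: "norm ?v = 1" by simp
  have "bdd_above ?S"
  proof (rule bdd_aboveI)
    fix c assume "c \<in> ?S"
    then have "c * norm ?v \<le> norm (A *v ?v)" by blast
    then show "c \<le> norm (A *v ?v)" using nv by simp
  qed
  moreover have "0 \<in> ?S" by simp
  ultimately show ?thesis unfolding min_norm_def by (meson cSup_upper)
qed

theorem theorem4p3:
  fixes U :: "((real^'u) \<times> (real^'s)) set"
    and f :: "(real^'u) \<times> (real^'s) \<Rightarrow> (real^'u) \<times> (real^'s)"
    and f' :: "(real^'u) \<times> (real^'s) \<Rightarrow> (((real^'u) \<times> (real^'s)) \<Rightarrow>\<^sub>L ((real^'u) \<times> (real^'s)))"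
    and M \<xi> \<mu> :: real
  assumes "convex U" and "0 \<in> interior U"
    and "\<And>z. z \<in> U \<Longrightarrow> (f has_derivative blinfun_apply (f' z)) (at z within U)"
    and "continuous_on U f'"
    and "f 0 = 0"
    and "M > 0"
    and "\<And>z. z \<in> U \<Longrightarrow>
      min_norm_set (interval_matrix U (\<lambda>z. matrix (dxx (f' z))))
        - (1 / M) * onorm (dxy (f' z)) \<ge> \<xi>"
    and "\<And>z. z \<in> U \<Longrightarrow> onorm (dyy (f' z)) + M * onorm (dyx (f' z)) \<le> \<mu>"
    and "\<xi> / \<mu> > 1"
  shows "f ` (closure (- Js M) \<inter> U) \<subseteq> (- Js M) \<union> {0}"
proof
  fix w assume "w \<in> f ` (closure (- Js M) \<inter> U)"
  then obtain z where zc: "z \<in> closure (- Js M)" and zU: "z \<in> U" and w: "w = f z" by auto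
  obtain x y where z: "z = (x,y)" by (cases z)
  have cl: "closure (- (Js M :: ((real^'u) \<times> (real^'s)) set)) \<subseteq> {p. M * norm (snd p) \<le> norm (fst p)}"
  proof (rule closure_minimal)
    show "- (Js M :: ((real^'u) \<times> (real^'s)) set) \<subseteq> {p. M * norm (snd p) \<le> norm (fst p)}"
      by (auto simp: Js_def)
    show "closed {p. M * norm (snd p) \<le> norm (fst (p::(real^'u) \<times> (real^'s)))}"
      by (intro closed_Collect_le continuous_on_mult continuous_on_const continuous_on_norm continuous_on_snd continuous_on_fst continuous_on_id)
  qed
  with zc z have xy: "M * norm y \<le> norm x" by auto
  have U0: "0 \<in> U" using assms(2) interior_subset by blast
  have "0 \<le> onorm (dyy (f' 0)) + M * onorm (dyx (f' 0))"
    using onorm_pos_le[OF bl_dyy, of "f' 0"] onorm_pos_le[OF bl_dyx, of "f' 0"] assms(6) by simp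
  then have mu0: "0 \<le> \<mu>" using assms(8)[OF U0] by linarith
  have mu: "0 < \<mu>" "\<mu> < \<xi>"
  proof -
    have "\<mu> \<noteq> 0" using assms(9) by auto
    then show "0 < \<mu>" using mu0 by simp
    then show "\<mu> < \<xi>" using assms(9) by (simp add: field_simps)
  qed
  show "w \<in> (- Js M) \<union> {0}"
  proof (cases "x = 0")
    case True
    then have "M * norm y \<le> 0" using xy by simp
    then have "y = 0" using assms(6)
      by (metis mult_le_0_iff norm_le_zero_iff not_le)
    then show ?thesis using True z w assms(5) by (simp add: zero_prod_def)
  next
    case xne: False
    define m where "m = min_norm_set (interval_matrix U (\<lambda>z. matrix (dxx (f' z))))"
    define S where "S = interval_matrix U (\<lambda>z. matrix (dxx (f' z)))"
    define G where "G t = f' (t *\<^sub>R z)" for t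
    have seg: "t *\<^sub>R z \<in> U" if "t \<in> {0..1}" for t
      using assms(1)[unfolded convex_def, rule_format, OF U0 zU, of "1 - t" t] that by simp
    have contG: "continuous_on {0..1} G"
      unfolding G_def
      by (rule continuous_on_compose2[OF assms(4)]) (auto intro!: continuous_intros seg)
    have contGv: "continuous_on {0..1} (\<lambda>t. blinfun_apply (G t) v)" for v
      using contG by (intro continuous_intros)
    have deriv: "((\<lambda>t. f (t *\<^sub>R z)) has_vector_derivative (G t z)) (at t within {0..1})"
      if t: "t \<in> {0..1}" for t
    proof -
      have d1: "((\<lambda>t. t *\<^sub>R z) has_derivative (\<lambda>s. s *\<^sub>R z)) (at t within {0..1})"
        by (intro derivative_eq_intros) auto
      have d2: "(f has_derivative blinfun_apply (G t)) (at (t *\<^sub>R z) within ((\<lambda>t. t *\<^sub>R z) ` {0..1}))"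
        unfolding G_def using assms(3)[OF seg[OF t]] by (rule has_derivative_subset) (use seg in \<open>fastforce\<close>)
      have "((f \<circ> (\<lambda>t. t *\<^sub>R z)) has_derivative (blinfun_apply (G t) \<circ> (\<lambda>s. s *\<^sub>R z))) (at t within {0..1})"
        by (rule diff_chain_within[OF d1 d2])
      then show ?thesis
        unfolding has_vector_derivative_def by (simp add: o_def blinfun.scaleR_right)
    qed
    have hint: "((\<lambda>t. G t z) has_integral f z) {0..1}"
      using fundamental_theorem_of_calculus[of 0 1 "\<lambda>t. f (t *\<^sub>R z)" "\<lambda>t. G t z"] deriv assms(5)
      by simp
    have split_z: "G t z = G t (x,0) + G t (0,y)" for t
      unfolding z by (simp add: blinfun.add_right[symmetric])
    have fstG: "fst (G t z) = dxx (G t) x + dxy (G t) y" for t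
      using split_z by (simp add: dxx_def dxy_def)
    have sndG: "snd (G t z) = dyx (G t) x + dyy (G t) y" for t
      using split_z by (simp add: dyx_def dyy_def)
    have hfst: "((\<lambda>t. fst (G t z)) has_integral fst (f z)) {0..1}"
      using has_integral_linear[OF hint bounded_linear_fst] by (simp add: o_def)
    have hsnd: "((\<lambda>t. snd (G t z)) has_integral snd (f z)) {0..1}"
      using has_integral_linear[OF hint bounded_linear_snd] by (simp add: o_def)
    define Mt where "Mt t = matrix (dxx (G t))" for t
    have Mt_eq: "Mt t = (\<chi> i j. fst (blinfun_apply (G t) (axis j 1, 0)) $ i)" for t
      unfolding Mt_def matrix_def dxx_def by simp
    have contMt: "continuous_on {0..1} Mt"
      unfolding Mt_eq
      by (intro continuous_on_vec_lambda continuous_on_component continuous_on_fst contGv)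
    have intMt: "Mt integrable_on {0..1}"
      using contMt by (rule integrable_continuous_real)
    define A where "A = integral {0..1} Mt"
    have hA: "(Mt has_integral A) {0..1}" unfolding A_def using intMt by (rule integrable_integral)
    have Mtx: "Mt t *v x = dxx (G t) x" for t
      unfolding Mt_def
      by (rule matrix_works) (simp add: linear_matrix_vector_mul_eq bounded_linear.linear[OF bl_dxx])
    have hAx: "((\<lambda>t. dxx (G t) x) has_integral A *v x) {0..1}"
      using has_integral_linear[OF hA bl_matvec[of x]] by (simp add: o_def Mtx)
    define b where "b = fst (f z) - A *v x"
    have hb: "((\<lambda>t. dxy (G t) y) has_integral b) {0..1}"
      using has_integral_diff[OF hfst hAx] unfolding b_def by (simp add: fstG)
    have Aij: "A $ i $ j = integral {0..1} (\<lambda>t. Mt t $ i $ j)" for i j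
    proof -
      have bl: "bounded_linear (\<lambda>B::real^'u^'u. B $ i $ j)"
        using bounded_linear_compose[OF bounded_linear_vec_nth[of j] bounded_linear_vec_nth[of i]]
        by (simp add: o_def)
      show ?thesis using integral_linear[OF intMt bl] unfolding A_def by (simp add: o_def)
    qed
    have intij: "(\<lambda>t. Mt t $ i $ j) integrable_on {0..1}" for i j
      using contMt by (intro integrable_continuous_real continuous_intros)
    have AS: "A \<in> S"
      unfolding S_def interval_matrix_def
    proof (intro CollectI allI conjI impI)
      fix i j c
      assume h: "\<forall>z\<in>U. c \<le> matrix (dxx (f' z)) $ i $ j"
      have "integral {0..1} (\<lambda>t::real. c) \<le> integral {0..1} (\<lambda>t. Mt t $ i $ j)"
      proof (rule integral_le[OF _ intij])
        fix t :: real assume "t \<in> {0..1}"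
        then show "c \<le> Mt t $ i $ j" using h seg unfolding Mt_def G_def by blast
      qed (rule integrable_const_ivl)
      then show "c \<le> A $ i $ j" by (simp add: Aij)
    next
      fix i j c
      assume h: "\<forall>z\<in>U. matrix (dxx (f' z)) $ i $ j \<le> c"
      have "integral {0..1} (\<lambda>t. Mt t $ i $ j) \<le> integral {0..1} (\<lambda>t::real. c)"
      proof (rule integral_le[OF intij])
        fix t :: real assume "t \<in> {0..1}"
        then show "Mt t $ i $ j \<le> c" using h seg unfolding Mt_def G_def by blast
      qed (rule integrable_const_ivl)
      then show "A $ i $ j \<le> c" by (simp add: Aij)
    qed
    have bb: "bdd_below (min_norm ` S)"
      by (rule bdd_belowI[where m=0]) (auto simp: min_norm_nonneg)
    have mA: "m \<le> min_norm A"
      unfolding m_def S_def[symmetric] min_norm_set_def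
      by (rule cInf_lower[OF imageI[OF AS] bb])
    have nAx: "m * norm x \<le> norm (A *v x)"
      using min_norm_bound[of A x] mA by (meson mult_right_mono norm_ge_zero order_trans)
    have dxy_b: "onorm (dxy (f' p)) \<le> M * (m - \<xi>)" if "p \<in> U" for p
      using assms(7)[OF that] assms(6) unfolding m_def by (simp add: field_simps)
    have mxi0: "0 \<le> M * (m - \<xi>)"
      using dxy_b[OF U0] onorm_pos_le[OF bl_dxy, of "f' 0"] by linarith
    have mxi: "0 \<le> m - \<xi>"
      using mxi0 assms(6) by (simp add: zero_le_mult_iff)
    have nb: "norm b \<le> M * (m - \<xi>) * norm y"
    proof -
      have "norm b \<le> (M * (m - \<xi>) * norm y) * Henstock_Kurzweil_Integration.content (cbox (0::real) 1)"
      proof (rule has_integral_bound)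
        show "0 \<le> M * (m - \<xi>) * norm y" using mxi assms(6) by simp
        show "((\<lambda>t. dxy (G t) y) has_integral b) (cbox 0 1)" using hb by simp
        fix t assume t: "t \<in> cbox (0::real) 1"
        have "norm (dxy (G t) y) \<le> onorm (dxy (G t)) * norm y" by (rule onorm[OF bl_dxy])
        also have "\<dots> \<le> M * (m - \<xi>) * norm y"
          using dxy_b[OF seg, of t] t unfolding G_def by (intro mult_right_mono) auto
        finally show "norm (dxy (G t) y) \<le> M * (m - \<xi>) * norm y" .
      qed
      then show ?thesis by simp
    qed
    have nfst: "\<xi> * norm x \<le> norm (fst (f z))"
    proof -
      have "fst (f z) = A *v x + b" unfolding b_def by simp
      then have "norm (A *v x) - norm b \<le> norm (fst (f z))"
        by (metis norm_diff_ineq diff_minus_eq_add norm_minus_cancel)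
      moreover have "M * (m - \<xi>) * norm y \<le> (m - \<xi>) * norm x"
        using mult_left_mono[OF xy mxi] by (simp add: algebra_simps)
      ultimately show ?thesis using nAx nb by (simp add: algebra_simps)
    qed
    have nsnd: "M * norm (snd (f z)) \<le> \<mu> * norm x"
    proof -
      have "norm (snd (f z)) \<le> (\<mu> * norm x / M) * Henstock_Kurzweil_Integration.content (cbox (0::real) 1)"
      proof (rule has_integral_bound)
        show "0 \<le> \<mu> * norm x / M" using mu assms(6) by simp
        show "((\<lambda>t. snd (G t z)) has_integral snd (f z)) (cbox 0 1)" using hsnd by simp
        fix t assume t: "t \<in> cbox (0::real) 1"
        then have tU: "t *\<^sub>R z \<in> U" using seg by simp
        have ny: "norm y \<le> norm x / M" using xy assms(6) by (simp add: field_simps)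
        have "norm (snd (G t z)) \<le> norm (dyx (G t) x) + norm (dyy (G t) y)"
          unfolding sndG by (rule norm_triangle_ineq)
        also have "\<dots> \<le> onorm (dyx (G t)) * norm x + onorm (dyy (G t)) * norm y"
          by (intro add_mono onorm[OF bl_dyx] onorm[OF bl_dyy])
        also have "\<dots> \<le> onorm (dyx (G t)) * norm x + onorm (dyy (G t)) * (norm x / M)"
          by (intro add_left_mono mult_left_mono ny onorm_pos_le[OF bl_dyy])
        also have "\<dots> = (onorm (dyy (G t)) + M * onorm (dyx (G t))) * norm x / M"
          using assms(6) by (simp add: field_simps)
        also have "\<dots> \<le> \<mu> * norm x / M"
          using assms(8)[OF tU] assms(6) unfolding G_def
          by (intro divide_right_mono mult_right_mono) auto
        finally show "norm (snd (G t z)) \<le> \<mu> * norm x / M" .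
      qed
      then show ?thesis using assms(6) by (simp add: field_simps)
    qed
    have "\<mu> * norm x < \<xi> * norm x" using mu xne by simp
    then have "M * norm (snd (f z)) < norm (fst (f z))" using nfst nsnd by linarith
    then have "f z \<notin> Js M" unfolding Js_def by (cases "f z") auto
    then show ?thesis using w by simp
  qed
qed

end
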